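(* Let $\rho=(V,B_1,B_2,B_3,I,J)$ be a framed representation, and let $\alpha=(V,B_1,B_2,I,J)$ be its underlying ADHM representation. Then $\rho$ is cyclic if and only if $\alpha$ is cyclic (stable). Here: - $\rho$ is cyclic if there is no proper nonzero subspace $V'\subset V$ preserved by $B_1,B_2,B_3$ and containing $\mathrm{Im}\,I$; - $\alpha$ is cyclic if there is no proper nonzero subspace $V'\subset V$ preserved by $B_1,B_2$ and containing $\mathrm{Im}\,I$.
   Context: A framed representation consists of: - a finite-dimensional complex vector space $V$; - the fixed space $V_\infty=\mathbb{C}^r$ with basis $e_1,\dots,e_r$, and the fixed map $A_r\in\mathrm{End}(V_\infty)$ with $A_re_a=e_{a+1}$, $e_{r+1}=0$; - linear maps $B_1,B_2,B_3\in\mathrm{End}(V)$, $I:V_\infty\to V$, $J:V\to V_\infty$. These satisfy $$[B_1,B_2]+IJ=0,\quad JB_3-A_rJ=0,\quad B_3I-IA_r=0,\quad [B_3,B_1]=0,\quad [B_3,B_2]=0.$$ *)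

theory Defs
  imports "Jordan_Normal_Form.Matrix"
begin

text \<open>V = complex^n (n = dim V), V_infinity = complex^r; linear maps are complex matrices.
  Basis vectors are 0-indexed: A_r e_a = e_(a+1), and the last one is sent to 0.\<close>

definition shift_mat :: "nat \<Rightarrow> complex mat" where
  "shift_mat r = mat r r (\<lambda>(i, j). if i = Suc j then 1 else 0)"

definition is_framed_rep ::
  "nat \<Rightarrow> nat \<Rightarrow> complex mat \<Rightarrow> complex mat \<Rightarrow> complex mat \<Rightarrow> complex mat \<Rightarrow> complex mat \<Rightarrow> bool" where
  "is_framed_rep n r B1 B2 B3 I J \<longleftrightarrow>
     B1 \<in> carrier_mat n n \<and> B2 \<in> carrier_mat n n \<and> B3 \<in> carrier_mat n n \<and>
     I \<in> carrier_mat n r \<and> J \<in> carrier_mat r n \<and>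
     B1 * B2 - B2 * B1 + I * J = 0\<^sub>m n n \<and>
     J * B3 - shift_mat r * J = 0\<^sub>m r n \<and>
     B3 * I - I * shift_mat r = 0\<^sub>m n r \<and>
     B3 * B1 - B1 * B3 = 0\<^sub>m n n \<and>
     B3 * B2 - B2 * B3 = 0\<^sub>m n n"

definition is_subspace :: "nat \<Rightarrow> complex vec set \<Rightarrow> bool" where
  "is_subspace n W \<longleftrightarrow> W \<subseteq> carrier_vec n \<and> 0\<^sub>v n \<in> W \<and>
     (\<forall>x\<in>W. \<forall>y\<in>W. x + y \<in> W) \<and> (\<forall>c::complex. \<forall>x\<in>W. c \<cdot>\<^sub>v x \<in> W)"

definition preserves :: "complex mat \<Rightarrow> complex vec set \<Rightarrow> bool" where
  "preserves B W \<longleftrightarrow> (\<forall>x\<in>W. B *\<^sub>v x \<in> W)"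

definition image_mat :: "nat \<Rightarrow> complex mat \<Rightarrow> complex vec set" where
  "image_mat r I = {I *\<^sub>v w | w. w \<in> carrier_vec r}"

definition framed_cyclic ::
  "nat \<Rightarrow> nat \<Rightarrow> complex mat \<Rightarrow> complex mat \<Rightarrow> complex mat \<Rightarrow> complex mat \<Rightarrow> bool" where
  "framed_cyclic n r B1 B2 B3 I \<longleftrightarrow>
     \<not> (\<exists>W. is_subspace n W \<and> W \<noteq> {0\<^sub>v n} \<and> W \<noteq> carrier_vec n \<and>
           preserves B1 W \<and> preserves B2 W \<and> preserves B3 W \<and> image_mat r I \<subseteq> W)"

definition adhm_cyclic ::
  "nat \<Rightarrow> nat \<Rightarrow> complex mat \<Rightarrow> complex mat \<Rightarrow> complex mat \<Rightarrow> bool" where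
  "adhm_cyclic n r B1 B2 I \<longleftrightarrow>
     \<not> (\<exists>W. is_subspace n W \<and> W \<noteq> {0\<^sub>v n} \<and> W \<noteq> carrier_vec n \<and>
           preserves B1 W \<and> preserves B2 W \<and> image_mat r I \<subseteq> W)"

end

theory Submission
  imports Defs "Jordan_Normal_Form.Spectral_Radius"
begin

lemma mat_eq_of_diff_zero:
  fixes A B :: "complex mat"
  assumes "A \<in> carrier_mat n m" "B \<in> carrier_mat n m" "A - B = 0\<^sub>m n m"
  shows "A = B"
proof -
  have "A $$ (i,j) = B $$ (i,j)" if ij: "i < n" "j < m" for i j
  proof -
    have "A $$ (i,j) - B $$ (i,j) = 0"
      using arg_cong[OF assms(3), of "\<lambda>M. M $$ (i,j)"] assms(1,2) ij by simp
    then show ?thesis by simp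
  qed
  then show ?thesis using assms by (intro eq_matI) auto
qed

lemma mat_mult_zero_vec:
  assumes "(A :: complex mat) \<in> carrier_mat n n"
  shows "A *\<^sub>v 0\<^sub>v n = 0\<^sub>v n"
  using assms by (intro eq_vecI) (auto simp: scalar_prod_def)

lemma comm_apply:
  assumes "(A :: complex mat) \<in> carrier_mat n n" "B \<in> carrier_mat n n" "x \<in> carrier_vec n" "A * B = B * A"
  shows "A *\<^sub>v (B *\<^sub>v x) = B *\<^sub>v (A *\<^sub>v x)"
proof -
  have "A *\<^sub>v (B *\<^sub>v x) = (A * B) *\<^sub>v x" using assms(1-3) by simp
  also have "\<dots> = (B * A) *\<^sub>v x" using assms(4) by simp
  also have "\<dots> = B *\<^sub>v (A *\<^sub>v x)" using assms(1-3) by simp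
  finally show ?thesis .
qed

lemma framed_cyclicD:
  assumes "framed_cyclic n r B1 B2 B3 I" "is_subspace n W" "W \<noteq> {0\<^sub>v n}" "W \<noteq> carrier_vec n"
    "preserves B1 W" "preserves B2 W" "preserves B3 W" "image_mat r I \<subseteq> W"
  shows False
  using assms unfolding framed_cyclic_def by blast

theorem lemma3p2:
  fixes n r :: nat and B1 B2 B3 I J :: "complex mat"
  assumes "is_framed_rep n r B1 B2 B3 I J"
  shows "framed_cyclic n r B1 B2 B3 I \<longleftrightarrow> adhm_cyclic n r B1 B2 I"
proof
  assume "adhm_cyclic n r B1 B2 I"
  then show "framed_cyclic n r B1 B2 B3 I"
    unfolding adhm_cyclic_def framed_cyclic_def by blast
next
  note R = assms[unfolded is_framed_rep_def]
  have c1: "B1 \<in> carrier_mat n n" and c2: "B2 \<in> carrier_mat n n" and c3: "B3 \<in> carrier_mat n n"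
    and cI: "I \<in> carrier_mat n r" using R by auto
  have cS: "shift_mat r \<in> carrier_mat r r" by (simp add: shift_mat_def)
  have com1: "B3 * B1 = B1 * B3"
    by (rule mat_eq_of_diff_zero[of _ n n]) (use R c1 c3 in auto)
  have com2: "B3 * B2 = B2 * B3"
    by (rule mat_eq_of_diff_zero[of _ n n]) (use R c2 c3 in auto)
  have comI: "B3 * I = I * shift_mat r"
    by (rule mat_eq_of_diff_zero[of _ n r]) (use R cI c3 cS in auto)
  assume fc: "framed_cyclic n r B1 B2 B3 I"
  show "adhm_cyclic n r B1 B2 I"
  proof (rule ccontr)
    assume "\<not> adhm_cyclic n r B1 B2 I"
    then obtain W where W: "is_subspace n W" "W \<noteq> {0\<^sub>v n}" "W \<noteq> carrier_vec n"
      "preserves B1 W" "preserves B2 W" "image_mat r I \<subseteq> W"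
      unfolding adhm_cyclic_def by blast
    define P where "P S \<longleftrightarrow> is_subspace n S \<and> preserves B1 S \<and> preserves B2 S \<and> image_mat r I \<subseteq> S" for S
    define W0 where "W0 = {x \<in> carrier_vec n. \<forall>S. P S \<longrightarrow> x \<in> S}"
    have PW: "P W" using W unfolding P_def by auto
    have Pc: "P (carrier_vec n)"
      using c1 c2 cI unfolding P_def is_subspace_def preserves_def image_mat_def by auto
    have PW0: "P W0"
      unfolding P_def is_subspace_def preserves_def image_mat_def W0_def
      using c1 c2 cI unfolding P_def is_subspace_def preserves_def image_mat_def
      by (auto simp: subset_iff)
    have W0W: "W0 \<subseteq> W" using PW unfolding W0_def P_def is_subspace_def by auto
    have W0min: "W0 \<subseteq> S" if "P S" for S using that unfolding W0_def by auto
    show False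
    proof (cases "W0 = {0\<^sub>v n}")
      case False
      define U where "U = {x \<in> carrier_vec n. B3 *\<^sub>v x \<in> W0}"
      have u1: "U \<subseteq> carrier_vec n" unfolding U_def by auto
      have W0s: "W0 \<subseteq> carrier_vec n" "0\<^sub>v n \<in> W0" "\<And>x y. x \<in> W0 \<Longrightarrow> y \<in> W0 \<Longrightarrow> x + y \<in> W0"
        "\<And>c x. x \<in> W0 \<Longrightarrow> c \<cdot>\<^sub>v x \<in> W0"
        using PW0 unfolding P_def is_subspace_def by auto
      have u2: "0\<^sub>v n \<in> U" unfolding U_def using W0s(2) mat_mult_zero_vec[OF c3] by simp
      have u3: "x + y \<in> U" if "x \<in> U" "y \<in> U" for x y
      proof -
        have x: "x \<in> carrier_vec n" "B3 *\<^sub>v x \<in> W0" and y: "y \<in> carrier_vec n" "B3 *\<^sub>v y \<in> W0"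
          using that unfolding U_def by auto
        have "B3 *\<^sub>v (x + y) = B3 *\<^sub>v x + B3 *\<^sub>v y" by (rule mult_add_distrib_mat_vec[OF c3 x(1) y(1)])
        then have "B3 *\<^sub>v (x + y) \<in> W0" using W0s(3)[OF x(2) y(2)] by simp
        then show ?thesis using x y unfolding U_def by simp
      qed
      have u4: "c \<cdot>\<^sub>v x \<in> U" if "x \<in> U" for x c
      proof -
        have x: "x \<in> carrier_vec n" "B3 *\<^sub>v x \<in> W0" using that unfolding U_def by auto
        have "B3 *\<^sub>v (c \<cdot>\<^sub>v x) = c \<cdot>\<^sub>v (B3 *\<^sub>v x)" by (rule mult_mat_vec[OF c3 x(1)])
        then have "B3 *\<^sub>v (c \<cdot>\<^sub>v x) \<in> W0" using W0s(4)[OF x(2)] by simp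
        then show ?thesis using x unfolding U_def by simp
      qed
      have u5: "B1 *\<^sub>v x \<in> U" if x: "x \<in> U" for x
      proof -
        have "B3 *\<^sub>v (B1 *\<^sub>v x) = B1 *\<^sub>v (B3 *\<^sub>v x)"
          using x unfolding U_def by (intro comm_apply[OF c3 c1 _ com1]) auto
        then show ?thesis using x c1 PW0 unfolding U_def P_def preserves_def by auto
      qed
      have u6: "B2 *\<^sub>v x \<in> U" if x: "x \<in> U" for x
      proof -
        have "B3 *\<^sub>v (B2 *\<^sub>v x) = B2 *\<^sub>v (B3 *\<^sub>v x)"
          using x unfolding U_def by (intro comm_apply[OF c3 c2 _ com2]) auto
        then show ?thesis using x c2 PW0 unfolding U_def P_def preserves_def by auto
      qed
      have u7: "x \<in> U" if "x \<in> image_mat r I" for x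
      proof -
        from that obtain w where w: "w \<in> carrier_vec r" "x = I *\<^sub>v w"
          unfolding image_mat_def by auto
        have "B3 *\<^sub>v x = I *\<^sub>v (shift_mat r *\<^sub>v w)"
        proof -
          have "B3 *\<^sub>v x = (B3 * I) *\<^sub>v w" using w cI c3 by simp
          also have "\<dots> = (I * shift_mat r) *\<^sub>v w" using comI by simp
          also have "\<dots> = I *\<^sub>v (shift_mat r *\<^sub>v w)" using w cI cS by simp
          finally show ?thesis .
        qed
        moreover have "shift_mat r *\<^sub>v w \<in> carrier_vec r" using cS w by auto
        ultimately have "B3 *\<^sub>v x \<in> image_mat r I" unfolding image_mat_def by auto
        then show "x \<in> U" using PW0 w cI unfolding U_def P_def by auto
      qed
      have "P U" unfolding P_def is_subspace_def preserves_def
        using u1 u2 u3 u4 u5 u6 u7 by (simp add: subset_iff)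
      then have "preserves B3 W0" using W0min[of U] unfolding U_def preserves_def by auto
      then show False using fc PW0 False W0W W(3) unfolding framed_cyclic_def P_def
        using W(1) unfolding is_subspace_def by blast
    next
      case True
      have "image_mat r I \<subseteq> W0" using PW0 unfolding P_def by blast
      then have imI: "image_mat r I \<subseteq> {0\<^sub>v n}" using True by simp
      have "n > 0"
      proof (rule ccontr)
        assume "\<not> n > 0"
        then have n0: "n = 0" by simp
        have "carrier_vec 0 = {0\<^sub>v 0}" unfolding carrier_vec_def by auto
        then have "carrier_vec n = {0\<^sub>v n}" using n0 by simp
        then show False using W(1,2,3) unfolding is_subspace_def by blast
      qed
      from spectrum_non_empty[OF c3 this] obtain k where "eigenvalue B3 k"
        unfolding spectrum_def by auto
      then obtain v where v: "v \<in> carrier_vec n" "v \<noteq> 0\<^sub>v n" "B3 *\<^sub>v v = k \<cdot>\<^sub>v v"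
        unfolding eigenvalue_def eigenvector_def using c3 by auto
      define E where "E = {x \<in> carrier_vec n. B3 *\<^sub>v x = k \<cdot>\<^sub>v x}"
      show False
      proof (cases "E = carrier_vec n")
        case True
        have "preserves B3 W" unfolding preserves_def
        proof
          fix x assume x: "x \<in> W"
          then have "x \<in> E" using True W(1) unfolding is_subspace_def by auto
          then have "B3 *\<^sub>v x = k \<cdot>\<^sub>v x" unfolding E_def by auto
          then show "B3 *\<^sub>v x \<in> W" using x W(1) unfolding is_subspace_def by auto
        qed
        then show False using framed_cyclicD[OF fc W(1,2,3,4,5) _ W(6)] by simp
      next
        case False
        have "k \<cdot>\<^sub>v 0\<^sub>v n = 0\<^sub>v n" by (intro eq_vecI) auto
        then have e1: "0\<^sub>v n \<in> E" unfolding E_def using mat_mult_zero_vec[OF c3] by simp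
        have e2: "x + y \<in> E" if "x \<in> E" "y \<in> E" for x y
        proof -
          have x: "x \<in> carrier_vec n" "B3 *\<^sub>v x = k \<cdot>\<^sub>v x" and y: "y \<in> carrier_vec n" "B3 *\<^sub>v y = k \<cdot>\<^sub>v y"
            using that unfolding E_def by auto
          have "B3 *\<^sub>v (x + y) = k \<cdot>\<^sub>v x + k \<cdot>\<^sub>v y"
            using mult_add_distrib_mat_vec[OF c3 x(1) y(1)] x y by simp
          also have "\<dots> = k \<cdot>\<^sub>v (x + y)" using x(1) y(1) by (simp add: smult_add_distrib_vec)
          finally show ?thesis using x y unfolding E_def by simp
        qed
        have e3: "c \<cdot>\<^sub>v x \<in> E" if "x \<in> E" for x c
        proof -
          have x: "x \<in> carrier_vec n" "B3 *\<^sub>v x = k \<cdot>\<^sub>v x" using that unfolding E_def by auto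
          have "B3 *\<^sub>v (c \<cdot>\<^sub>v x) = c \<cdot>\<^sub>v (k \<cdot>\<^sub>v x)" using mult_mat_vec[OF c3 x(1)] x by simp
          also have "\<dots> = k \<cdot>\<^sub>v (c \<cdot>\<^sub>v x)" by (simp add: smult_smult_assoc mult.commute)
          finally show ?thesis using x unfolding E_def by simp
        qed
        have sub: "is_subspace n E" unfolding is_subspace_def
          using e1 e2 e3 unfolding E_def by blast
        have "v \<in> E" using v unfolding E_def by auto
        then have ne: "E \<noteq> {0\<^sub>v n}" using v by auto
        have p1: "preserves B1 E" unfolding preserves_def E_def
        proof (intro ballI)
          fix x assume x: "x \<in> {x \<in> carrier_vec n. B3 *\<^sub>v x = k \<cdot>\<^sub>v x}"
          have "B3 *\<^sub>v (B1 *\<^sub>v x) = B1 *\<^sub>v (B3 *\<^sub>v x)"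
            using x by (intro comm_apply[OF c3 c1 _ com1]) auto
          also have "\<dots> = k \<cdot>\<^sub>v (B1 *\<^sub>v x)" using x c1 by (auto simp: mult_mat_vec)
          finally show "B1 *\<^sub>v x \<in> {x \<in> carrier_vec n. B3 *\<^sub>v x = k \<cdot>\<^sub>v x}"
            using c1 x by auto
        qed
        have p2: "preserves B2 E" unfolding preserves_def E_def
        proof (intro ballI)
          fix x assume x: "x \<in> {x \<in> carrier_vec n. B3 *\<^sub>v x = k \<cdot>\<^sub>v x}"
          have "B3 *\<^sub>v (B2 *\<^sub>v x) = B2 *\<^sub>v (B3 *\<^sub>v x)"
            using x by (intro comm_apply[OF c3 c2 _ com2]) auto
          also have "\<dots> = k \<cdot>\<^sub>v (B2 *\<^sub>v x)" using x c2 by (auto simp: mult_mat_vec)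
          finally show "B2 *\<^sub>v x \<in> {x \<in> carrier_vec n. B3 *\<^sub>v x = k \<cdot>\<^sub>v x}"
            using c2 x by auto
        qed
        have p3: "preserves B3 E" unfolding preserves_def E_def
          using c3 by (auto simp: mult_mat_vec)
        have "image_mat r I \<subseteq> E" using imI sub unfolding is_subspace_def by auto
        then show False using framed_cyclicD[OF fc sub ne False p1 p2 p3] by simp
      qed
    qed
  qed
qed

end
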